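(* If $\sigma$ is a nonempty right closed subset of $\mathbb{R}$, then there exists a sequence $\{r_n\}_{n\ge1}$ whose right closure is $\sigma$.
   Context: A nonempty set $X\subseteq\mathbb{R}$ is right closed if $\sup Y\in X$ for every nonempty bounded $Y\subseteq X$. For nonempty $K\subseteq\mathbb{R}$, its right closure is $\lceil K\rceil=\{\sup\sigma':\emptyset\neq\sigma'\subseteq K,\ \sigma'\text{ bounded}\}$, the smallest right closed set containing $K$. *)

theory Defs
  imports Complex_Main
begin

definition right_closed :: "real set \<Rightarrow> bool" where
  "right_closed X \<longleftrightarrow> X \<noteq> {} \<and>
     (\<forall>Y. Y \<noteq> {} \<and> Y \<subseteq> X \<and> bdd_above Y \<and> bdd_below Y \<longrightarrow> Sup Y \<in> X)"

definition right_closure :: "real set \<Rightarrow> real set" where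
  "right_closure K = {Sup S | S. S \<noteq> {} \<and> S \<subseteq> K \<and> bdd_above S \<and> bdd_below S}"

end

theory Submission
  imports Defs "HOL-Library.Countable_Set"
begin

lemma sup_piece:
  fixes \<sigma> :: "real set"
  assumes rc: "right_closed \<sigma>" and y: "y \<in> \<sigma>" "a < y" "y \<le> b"
  shows "Sup (\<sigma> \<inter> {a<..b}) \<in> \<sigma> \<and> a < Sup (\<sigma> \<inter> {a<..b}) \<and> Sup (\<sigma> \<inter> {a<..b}) \<le> b"
proof -
  let ?S = "\<sigma> \<inter> {a<..b}"
  have ne: "?S \<noteq> {}" using y by auto
  have ba: "bdd_above ?S" by (rule bdd_aboveI[of _ b]) auto
  have bb: "bdd_below ?S" by (rule bdd_belowI[of _ a]) auto
  have "?S \<subseteq> \<sigma>" by simp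
  then have "Sup ?S \<in> \<sigma>" using rc ne ba bb unfolding right_closed_def by simp
  moreover have "y \<le> Sup ?S" using y ba by (intro cSup_upper) auto
  moreover have "Sup ?S \<le> b" using ne by (intro cSup_least) auto
  ultimately show ?thesis using y by auto
qed
theorem lemma3p7:
  fixes \<sigma> :: "real set"
  assumes "\<sigma> \<noteq> {}" and "right_closed \<sigma>"
  shows "\<exists>r :: nat \<Rightarrow> real. right_closure (r ` {1..}) = \<sigma>"
proof -
  note rc = assms(2)
  define D where "D = ((\<lambda>(a,b). Sup (\<sigma> \<inter> {a<..b})) ` (\<rat> \<times> \<rat>) \<union> (\<lambda>a. Inf (\<sigma> \<inter> {a<..})) ` \<rat>) \<inter> \<sigma>"
  have cD: "countable D" unfolding D_def
    by (intro countable_Int1 countable_Un countable_image countable_SIGMA countable_rat)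
  have Ds: "D \<subseteq> \<sigma>" unfolding D_def by auto
  have sub1: "right_closure D \<subseteq> \<sigma>"
  proof
    fix z assume "z \<in> right_closure D"
    then obtain S where S: "z = Sup S" "S \<noteq> {}" "S \<subseteq> D" "bdd_above S" "bdd_below S"
      unfolding right_closure_def by auto
    have "S \<subseteq> \<sigma>" using S(3) Ds by (rule order_trans)
    then show "z \<in> \<sigma>" using rc S unfolding right_closed_def by simp
  qed
  have sub2: "\<sigma> \<subseteq> right_closure D"
  proof
    fix x assume x: "x \<in> \<sigma>"
    show "x \<in> right_closure D"
    proof (cases "\<exists>a\<in>\<rat>. a < x \<and> \<sigma> \<inter> {a<..<x} = {}")
      case True
      then obtain a where a: "a \<in> \<rat>" "a < x" "\<sigma> \<inter> {a<..<x} = {}" by blast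
      have "Inf (\<sigma> \<inter> {a<..}) = x"
      proof (rule cInf_eq_minimum)
        show "x \<in> \<sigma> \<inter> {a<..}" using x a by auto
        fix y assume "y \<in> \<sigma> \<inter> {a<..}"
        show "x \<le> y" proof (rule ccontr)
          assume "\<not> x \<le> y"
          then have "y \<in> \<sigma> \<inter> {a<..<x}" using \<open>y \<in> \<sigma> \<inter> {a<..}\<close> by auto
          then show False using a(3) by simp
        qed
      qed
      then have "x \<in> D" unfolding D_def using a x by (auto intro!: image_eqI[of _ _ a])
      then have "Sup {x} \<in> right_closure D" unfolding right_closure_def
        by (intro CollectI exI[of _ "{x}"]) auto
      then show ?thesis by simp
    next
      case False
      have approx: "\<exists>d\<in>D. e < d \<and> d \<le> x" if "e < x" for e
      proof -
        obtain a where a: "a \<in> \<rat>" "e < a" "a < x" using Rats_dense_in_real[OF \<open>e < x\<close>] by blast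
        then obtain y where y: "y \<in> \<sigma>" "a < y" "y < x"
        proof -
          have "\<sigma> \<inter> {a<..<x} \<noteq> {}" using False a by auto
          then show ?thesis using that by auto
        qed
        obtain a' where a': "a' \<in> \<rat>" "a < a'" "a' < y" using Rats_dense_in_real[OF \<open>a < y\<close>] by blast
        obtain b where b: "b \<in> \<rat>" "y < b" "b < x" using Rats_dense_in_real[OF \<open>y < x\<close>] by blast
        have P: "Sup (\<sigma> \<inter> {a'<..b}) \<in> \<sigma> \<and> a' < Sup (\<sigma> \<inter> {a'<..b}) \<and> Sup (\<sigma> \<inter> {a'<..b}) \<le> b"
          using sup_piece[OF rc y(1), of a' b] a' b by auto
        have "Sup (\<sigma> \<inter> {a'<..b}) \<in> D" unfolding D_def using P a' b
          by (auto intro!: image_eqI[of _ _ "(a',b)"])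
        then show ?thesis using P a a' b by (intro bexI[of _ "Sup (\<sigma> \<inter> {a'<..b})"]) auto
      qed
      let ?S = "D \<inter> {x-1..x}"
      have ne: "?S \<noteq> {}" using approx[of "x-1"] by fastforce
      have "Sup ?S = x"
      proof (rule cSup_eq_non_empty)
        show "?S \<noteq> {}" by fact
        show "\<And>d. d \<in> ?S \<Longrightarrow> d \<le> x" by auto
        fix y assume ub: "\<And>d. d \<in> ?S \<Longrightarrow> d \<le> y"
        show "x \<le> y"
        proof (rule ccontr)
          assume "\<not> x \<le> y"
          then obtain d where "d \<in> D" "max y (x-1) < d" "d \<le> x" using approx[of "max y (x-1)"] by auto
          then show False using ub[of d] by auto
        qed
      qed
      moreover have "Sup ?S \<in> right_closure D" unfolding right_closure_def
        using ne by (intro CollectI exI[of _ ?S]) (auto intro: bdd_aboveI[of _ x] bdd_belowI[of _ "x-1"])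
      ultimately show ?thesis by simp
    qed
  qed
  have Dne: "D \<noteq> {}" using sub2 assms(1) unfolding right_closure_def by auto
  define r where "r n = from_nat_into D (n - 1)" for n
  have "r ` {1..} = range (from_nat_into D)"
  proof
    show "r ` {1..} \<subseteq> range (from_nat_into D)" unfolding r_def by auto
    show "range (from_nat_into D) \<subseteq> r ` {1..}"
    proof
      fix z assume "z \<in> range (from_nat_into D)"
      then obtain n where "z = from_nat_into D n" by auto
      then have "z = r (Suc n)" unfolding r_def by simp
      then show "z \<in> r ` {1..}" by auto
    qed
  qed
  also have "\<dots> = D" using range_from_nat_into[OF Dne cD] .
  finally show ?thesis using sub1 sub2 by blast
qed

end
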